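(* Let $\{\Sigma_t\}_{t\in[0,T]}$ be a smooth solution of inverse mean curvature flow in a Riemannian 3-manifold, foliating $U_T=\bigcup_{t\in[0,T]}\Sigma_t$, such that $\mathrm{Diam}(\Sigma_t)\le D$ for all $t\in[0,T]$ and $\frac{1}{H(x,t)}\le h(t)$ for $t\in[0,T]$, where $h\in L^1([0,T])$. Then $$\mathrm{Diam}(U_T)\le\int_0^Th(t)\,dt+D,$$ in particular $\mathrm{Diam}(U_T)$ is bounded by a finite constant.
   Context: A smooth solution of inverse mean curvature flow (IMCF) is a smooth family of embeddings $F:\Sigma\times[0,T]\to M$ of a closed surface with mean curvature $H>0$ and $\partial_tF=\nu/H$, $\nu$ the outward unit normal; $\Sigma_t=F(\Sigma,t)$. $\mathrm{Diam}(\Sigma_t)$ is the intrinsic diameter of $\Sigma_t$ with its induced metric, and $\mathrm{Diam}(U_T)$ is the diameter of $U_T\cong\Sigma\times[0,T]$ with respect to the length distance of the metric $\hat g=\frac{1}{H(x,t)^2}dt^2+g(x,t)$, where $g(x,t)$ is the induced metric on $\Sigma_t$ (i.e. the ambient metric restricted to $U_T$ in flow coordinates). *)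

theory Defs
  imports "HOL-Analysis.Analysis"
begin

(* C^infinity maps on an open set: Frechet differentiable, and every directional
   derivative x |-> D x v is again C^infinity (coinductively). *)
coinductive smooth_on :: "'a::real_normed_vector set \<Rightarrow> ('a \<Rightarrow> 'b::real_normed_vector) \<Rightarrow> bool"
  where "\<lbrakk>open U; \<And>x. x \<in> U \<Longrightarrow> (f has_derivative D x) (at x);
          \<And>v. smooth_on U (\<lambda>x. D x v)\<rbrakk> \<Longrightarrow> smooth_on U f"

definition closed_smooth_surface :: "'a::euclidean_space set \<Rightarrow> bool" where
  "closed_smooth_surface S \<longleftrightarrow> compact S \<and>
     (\<forall>p\<in>S. \<exists>U (V :: (real^2) set) \<psi> \<phi>. open U \<and> p \<in> U \<and> open V \<and>
        smooth_on V \<psi> \<and> homeomorphism V (S \<inter> U) \<psi> \<phi> \<and>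
        (\<forall>y\<in>V. \<forall>D. (\<psi> has_derivative D) (at y) \<longrightarrow> inj D))"

definition tangent_space :: "'a::euclidean_space set \<Rightarrow> 'a \<Rightarrow> 'a set" where
  "tangent_space S p = {v. \<exists>\<gamma>. \<gamma> ` {-1..1} \<subseteq> S \<and> \<gamma> 0 = p \<and>
        (\<gamma> has_vector_derivative v) (at 0 within {-1..1})}"

(* g x t is the metric g(x,t) on T_x Sigma (given as the restriction of an ambient
   bilinear form); smooth family of Riemannian metrics on S for t in [0,T]. *)
definition smooth_metric_family ::
  "'a::euclidean_space set \<Rightarrow> real \<Rightarrow> ('a \<Rightarrow> real \<Rightarrow> 'a \<Rightarrow> 'a \<Rightarrow> real) \<Rightarrow> bool" where
  "smooth_metric_family S T g \<longleftrightarrow>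
     (\<exists>W. open W \<and> S \<times> {0..T} \<subseteq> W \<and> (\<forall>u v. smooth_on W (\<lambda>(x,t). g x t u v))) \<and>
     (\<forall>x\<in>S. \<forall>t\<in>{0..T}. bilinear (g x t) \<and>
        (\<forall>u\<in>tangent_space S x. \<forall>v\<in>tangent_space S x. g x t u v = g x t v u) \<and>
        (\<forall>u\<in>tangent_space S x. u \<noteq> 0 \<longrightarrow> g x t u u > 0))"

definition admissible_curve :: "(real \<Rightarrow> 'b::euclidean_space) \<Rightarrow> 'b set \<Rightarrow> bool" where
  "admissible_curve \<gamma> A \<longleftrightarrow> \<gamma> piecewise_C1_differentiable_on {0..1} \<and> \<gamma> ` {0..1} \<subseteq> A"

(* length of a curve w.r.t. a (possibly degenerate off tangent vectors) metric given by
   Q p v = |v|^2_p *)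
definition curve_length :: "('b::euclidean_space \<Rightarrow> 'b \<Rightarrow> real) \<Rightarrow> (real \<Rightarrow> 'b) \<Rightarrow> ennreal" where
  "curve_length Q \<gamma> =
     (\<integral>\<^sup>+ s \<in> {0..1}. ennreal (sqrt (Q (\<gamma> s) (vector_derivative \<gamma> (at s)))) \<partial>lborel)"

definition length_dist :: "('b::euclidean_space \<Rightarrow> 'b \<Rightarrow> real) \<Rightarrow> 'b set \<Rightarrow> 'b \<Rightarrow> 'b \<Rightarrow> ennreal" where
  "length_dist Q A p q =
     Inf {curve_length Q \<gamma> | \<gamma>. admissible_curve \<gamma> A \<and> \<gamma> 0 = p \<and> \<gamma> 1 = q}"

definition length_diam :: "('b::euclidean_space \<Rightarrow> 'b \<Rightarrow> real) \<Rightarrow> 'b set \<Rightarrow> ereal" where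
  "length_diam Q A = Sup ((\<lambda>(p,q). enn2ereal (length_dist Q A p q)) ` (A \<times> A))"

definition diam_slice :: "'a::euclidean_space set \<Rightarrow> ('a \<Rightarrow> real \<Rightarrow> 'a \<Rightarrow> 'a \<Rightarrow> real) \<Rightarrow> real \<Rightarrow> ereal" where
  "diam_slice S g t = length_diam (\<lambda>x v. g x t v v) S"

(* diameter of U_T = Sigma x [0,T] with ghat = dt^2 / H^2 + g(x,t) *)
definition diam_UT :: "'a::euclidean_space set \<Rightarrow> real \<Rightarrow> ('a \<Rightarrow> real \<Rightarrow> 'a \<Rightarrow> 'a \<Rightarrow> real)
                        \<Rightarrow> ('a \<Rightarrow> real \<Rightarrow> real) \<Rightarrow> ereal" where
  "diam_UT S T g H = length_diam
     (\<lambda>(x,t) (v,\<tau>). \<tau>\<^sup>2 / (H x t)\<^sup>2 + g x t v v) (S \<times> {0..T})"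

end

theory Submission
  imports Defs
begin

lemma nn_lower_affine:
  fixes c t :: real and f :: "real \<Rightarrow> ennreal"
  assumes c: "c \<noteq> 0"
  shows "(\<integral>\<^sup>+x. f x \<partial>lborel) \<le> (\<integral>\<^sup>+x. ennreal \<bar>c\<bar> * f (t + c * x) \<partial>lborel)"
  unfolding nn_integral_def[of lborel f]
proof (rule SUP_least)
  fix g assume "g \<in> {g. simple_function lborel g \<and> g \<le> f}"
  then have sg: "simple_function lborel g" and gf: "g \<le> f" by auto
  have gm: "g \<in> borel_measurable borel"
    using borel_measurable_simple_function[OF sg] by simp
  have "integral\<^sup>S lborel g = (\<integral>\<^sup>+x. g x \<partial>lborel)"
    using nn_integral_eq_simple_integral[OF sg] by simp
  also have "\<dots> = ennreal \<bar>c\<bar> * (\<integral>\<^sup>+x. g (t + c * x) \<partial>lborel)"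
    using nn_integral_real_affine[OF gm c] by simp
  also have "\<dots> = (\<integral>\<^sup>+x. ennreal \<bar>c\<bar> * g (t + c * x) \<partial>lborel)"
    by (rule nn_integral_cmult[symmetric]) (use gm in measurable)
  also have "\<dots> \<le> (\<integral>\<^sup>+x. ennreal \<bar>c\<bar> * f (t + c * x) \<partial>lborel)"
    by (intro nn_integral_mono mult_left_mono) (use gf in \<open>auto simp: le_fun_def\<close>)
  finally show "integral\<^sup>S lborel g \<le> (\<integral>\<^sup>+x. ennreal \<bar>c\<bar> * f (t + c * x) \<partial>lborel)" .
qed

lemma nn_lower_split:
  fixes f :: "real \<Rightarrow> ennreal"
  assumes A: "A \<in> sets lborel"
  shows "(\<integral>\<^sup>+x. f x \<partial>lborel) \<le> (\<integral>\<^sup>+x. f x * indicator A x \<partial>lborel) + (\<integral>\<^sup>+x. f x * indicator (-A) x \<partial>lborel)"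
  unfolding nn_integral_def[of lborel f]
proof (rule SUP_least)
  fix g assume "g \<in> {g. simple_function lborel g \<and> g \<le> f}"
  then have sg: "simple_function lborel g" and gf: "g \<le> f" by auto
  have gm: "g \<in> borel_measurable lborel"
    using borel_measurable_simple_function[OF sg] by simp
  have Am: "-A \<in> sets lborel" using A by (simp add: Compl_eq_Diff_UNIV sets.compl_sets)
  have "integral\<^sup>S lborel g = (\<integral>\<^sup>+x. g x \<partial>lborel)"
    using nn_integral_eq_simple_integral[OF sg] by simp
  also have "\<dots> = (\<integral>\<^sup>+x. g x * indicator A x + g x * indicator (-A) x \<partial>lborel)"
    by (intro nn_integral_cong) (auto simp: indicator_def)
  also have "\<dots> = (\<integral>\<^sup>+x. g x * indicator A x \<partial>lborel) + (\<integral>\<^sup>+x. g x * indicator (-A) x \<partial>lborel)"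
    by (rule nn_integral_add) (use gm A Am in auto)
  also have "\<dots> \<le> (\<integral>\<^sup>+x. f x * indicator A x \<partial>lborel) + (\<integral>\<^sup>+x. f x * indicator (-A) x \<partial>lborel)"
    by (intro add_mono nn_integral_mono mult_right_mono) (use gf in \<open>auto simp: le_fun_def\<close>)
  finally show "integral\<^sup>S lborel g \<le> \<dots>" .
qed


lemma part1_bound:
  fixes s t T :: real and h :: "real \<Rightarrow> real" and Hx :: "real \<Rightarrow> real"
  assumes st: "s \<in> {0..T}" "t \<in> {0..T}"
    and hint: "set_integrable lborel {0..T} h"
    and Hpos: "\<And>u. u \<in> {0..T} \<Longrightarrow> Hx u > 0"
    and hb: "\<And>u. u \<in> {0..T} \<Longrightarrow> 1 / Hx u \<le> h u"
  shows "(\<integral>\<^sup>+r. ennreal (2 * \<bar>t - s\<bar> / Hx (s + 2 * r * (t - s))) * indicator {0<..<1/2} r \<partial>lborel)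
         \<le> ennreal (set_lebesgue_integral lborel {0..T} h)"
proof (cases "t = s")
  case True
  then show ?thesis by simp
next
  case False
  define c where "c = 1 / (2 * (t - s))"
  define d where "d = - s / (2 * (t - s))"
  have c0: "c \<noteq> 0" using False by (simp add: c_def)
  have hpos: "\<And>u. u \<in> {0..T} \<Longrightarrow> 0 \<le> h u"
    by (meson Hpos hb less_eq_real_def order_trans zero_le_divide_1_iff)
  have "(\<integral>\<^sup>+r. ennreal (2 * \<bar>t - s\<bar> / Hx (s + 2 * r * (t - s))) * indicator {0<..<1/2} r \<partial>lborel)
     \<le> (\<integral>\<^sup>+u. ennreal \<bar>c\<bar> * (ennreal (2 * \<bar>t - s\<bar> / Hx (s + 2 * (d + c * u) * (t - s))) * indicator {0<..<1/2} (d + c * u)) \<partial>lborel)"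
    by (rule nn_lower_affine[OF c0])
  also have "\<dots> \<le> (\<integral>\<^sup>+u. ennreal (indicator {0..T} u *\<^sub>R h u) \<partial>lborel)"
  proof (intro nn_integral_mono)
    fix u
    have "d + c * u = (u - s) / (2 * (t - s))"
      unfolding c_def d_def by (simp add: diff_divide_distrib)
    moreover have "2 * t - 2 * s \<noteq> 0" using False by simp
    ultimately have e1: "s + 2 * (d + c * u) * (t - s) = u"
      by (simp add: field_simps)
    show "ennreal \<bar>c\<bar> * (ennreal (2 * \<bar>t - s\<bar> / Hx (s + 2 * (d + c * u) * (t - s))) * indicator {0<..<1/2} (d + c * u))
          \<le> ennreal (indicator {0..T} u *\<^sub>R h u)"
    proof (cases "d + c * u \<in> {0<..<1/2}")
      case True
      have "u \<in> {0..T}"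
      proof -
        have "u = (1 - 2 * (d + c * u)) * s + 2 * (d + c * u) * t" using e1 by (simp add: algebra_simps)
        moreover have "0 \<le> (1 - 2 * (d + c * u)) * s" "(1 - 2 * (d + c * u)) * s \<le> (1 - 2 * (d + c * u)) * T"
          using True st by (auto intro!: mult_left_mono)
        moreover have "0 \<le> 2 * (d + c * u) * t" "2 * (d + c * u) * t \<le> 2 * (d + c * u) * T"
          using True st by (auto intro!: mult_left_mono)
        ultimately show ?thesis by (auto simp: algebra_simps)
      qed
      have ac: "\<bar>c\<bar> = 1 / (2 * \<bar>t - s\<bar>)" unfolding c_def by (simp add: abs_mult abs_divide abs_if field_simps)
      have "\<bar>t - s\<bar> > 0" using False by simp
      moreover have Hu: "Hx u > 0" using Hpos \<open>u \<in> {0..T}\<close> by simp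
      ultimately have eq: "\<bar>c\<bar> * (2 * \<bar>t - s\<bar> / Hx u) = 1 / Hx u"
        unfolding ac by (simp add: field_simps)
      have "0 \<le> 2 * \<bar>t - s\<bar> / Hx u" using Hu by simp
      then have "ennreal \<bar>c\<bar> * ennreal (2 * \<bar>t - s\<bar> / Hx u) = ennreal (\<bar>c\<bar> * (2 * \<bar>t - s\<bar> / Hx u))"
        by (metis abs_ge_zero ennreal_mult)
      then have "ennreal \<bar>c\<bar> * ennreal (2 * \<bar>t - s\<bar> / Hx u) = ennreal (1 / Hx u)"
        using eq by metis
      then show ?thesis using True e1 \<open>u \<in> {0..T}\<close> hb[of u] by (simp add: ennreal_leI)
    next
      case False
      then show ?thesis by simp
    qed
  qed
  also have "\<dots> = ennreal (set_lebesgue_integral lborel {0..T} h)"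
    unfolding set_lebesgue_integral_def
    by (rule nn_integral_eq_integral) (use hint hpos in \<open>auto simp: set_integrable_def indicator_def\<close>)
  finally show ?thesis .
qed


lemma part2_bound:
  fixes Fg :: "real \<Rightarrow> ennreal"
  shows "(\<integral>\<^sup>+r. 2 * Fg (2 * r - 1) * indicator {1/2<..<1} r \<partial>lborel)
         \<le> (\<integral>\<^sup>+u. Fg u * indicator {0..1} u \<partial>lborel)"
proof -
  have "(\<integral>\<^sup>+r. 2 * Fg (2 * r - 1) * indicator {1/2<..<1} r \<partial>lborel)
     \<le> (\<integral>\<^sup>+u. ennreal \<bar>1/2\<bar> * (2 * Fg (2 * (1/2 + 1/2 * u) - 1) * indicator {1/2<..<1} (1/2 + 1/2 * u)) \<partial>lborel)"
    by (rule nn_lower_affine) simp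
  also have "\<dots> \<le> (\<integral>\<^sup>+u. Fg u * indicator {0..1} u \<partial>lborel)"
  proof (intro nn_integral_mono)
    fix u :: real
    have e: "2 * (1/2 + 1/2 * u) - 1 = u" by simp
    have h2: "ennreal \<bar>1/2\<bar> * 2 = (1::ennreal)"
    proof -
      have "ennreal \<bar>1/2\<bar> * ennreal 2 = ennreal (\<bar>1/2\<bar> * 2)"
        by (rule ennreal_mult[symmetric]) auto
      then show ?thesis by simp
    qed
    have "ennreal \<bar>1/2\<bar> * (2 * Fg u * indicator {1/2<..<1} (1/2 + 1/2 * u))
        = Fg u * indicator {1/2<..<1} (1/2 + 1/2 * u)"
      using h2 by (metis mult.assoc mult_1)
    also have "\<dots> \<le> Fg u * indicator {0..1} u"
      by (intro mult_left_mono) (auto simp: indicator_def)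
    finally show "ennreal \<bar>1/2\<bar> * (2 * Fg (2 * (1/2 + 1/2 * u) - 1) * indicator {1/2<..<1} (1/2 + 1/2 * u))
        \<le> Fg u * indicator {0..1} u" unfolding e .
  qed
  finally show ?thesis .
qed

lemma conv_mem:
  fixes a b T l :: real
  assumes "a \<in> {0..T}" "b \<in> {0..T}" "0 \<le> l" "l \<le> 1"
  shows "(1 - l) * a + l * b \<in> {0..T}"
proof -
  have "(1 - l) * a \<le> (1 - l) * T" "l * b \<le> l * T" "l * a \<le> a" "0 \<le> l * b"
    using assms by (auto intro!: mult_left_mono mult_left_le_one_le)
  moreover have "(1 - l) * a + l * b = a - l * a + l * b" "(1 - l) * T + l * T = T"
    by (simp_all add: algebra_simps)
  moreover have "0 \<le> (1 - l) * a" using assms by simp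
  ultimately show ?thesis by simp
qed


lemma join_curve:
  fixes S :: "'a::euclidean_space set"
    and T s t :: real
    and g :: "'a \<Rightarrow> real \<Rightarrow> 'a \<Rightarrow> 'a \<Rightarrow> real"
    and H :: "'a \<Rightarrow> real \<Rightarrow> real"
    and h :: "real \<Rightarrow> real"
  assumes bil: "\<forall>x\<in>S. \<forall>t\<in>{0..T}. bilinear (g x t)"
    and H_pos: "\<forall>x\<in>S. \<forall>t\<in>{0..T}. H x t > 0"
    and h_L1: "set_integrable lborel {0..T} h"
    and H_bound: "\<forall>x\<in>S. \<forall>t\<in>{0..T}. 1 / H x t \<le> h t"
    and xS: "x \<in> S" and st: "s \<in> {0..T}" "t \<in> {0..T}"
    and adm: "admissible_curve \<gamma> S" and g0: "\<gamma> 0 = x" and g1: "\<gamma> 1 = y"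
  shows "length_dist (\<lambda>(x,t) (v,\<tau>). \<tau>\<^sup>2 / (H x t)\<^sup>2 + g x t v v) (S \<times> {0..T}) (x,s) (y,t)
         \<le> ennreal (set_lebesgue_integral lborel {0..T} h) + curve_length (\<lambda>x v. g x t v v) \<gamma>"
proof -
  define Q where "Q = (\<lambda>(x,t) (v,\<tau>). \<tau>\<^sup>2 / (H x t)\<^sup>2 + g x t v v)"
  obtain K D where finK: "finite K"
    and gD: "\<And>u. u \<in> {0..1} - K \<Longrightarrow> (\<gamma> has_vector_derivative D u) (at u)"
    and Dcont: "continuous_on ({0..1} - K) D"
    and gcont: "continuous_on {0..1} \<gamma>" and gS: "\<gamma> ` {0..1} \<subseteq> S"
    using adm unfolding admissible_curve_def piecewise_C1_differentiable_on_def C1_differentiable_on_def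
    by blast
  define \<alpha> where "\<alpha> = (\<lambda>r::real. (x, s + 2 * r * (t - s)))"
  define \<beta> where "\<beta> = (\<lambda>r::real. (\<gamma> (2 * r - 1), t))"
  define c where "c = (\<lambda>r. if r \<le> 1/2 then \<alpha> r else \<beta> r)"
  have \<alpha>D: "(\<alpha> has_vector_derivative (0, 2 * (t - s))) (at r)" for r
  proof -
    have "((\<lambda>r. s + 2 * r * (t - s)) has_real_derivative 2 * (t - s)) (at r)"
      by (auto intro!: derivative_eq_intros)
    then have "((\<lambda>r. s + 2 * r * (t - s)) has_vector_derivative 2 * (t - s)) (at r)"
      by (simp add: has_real_derivative_iff_has_vector_derivative)
    then show ?thesis unfolding \<alpha>_def
      by (intro has_vector_derivative_Pair) (auto intro: has_vector_derivative_const)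
  qed
  have \<alpha>pw: "\<alpha> piecewise_C1_differentiable_on {0..1/2}"
    by (rule C1_differentiable_imp_piecewise)
       (auto simp: C1_differentiable_on_def intro!: exI[of _ "\<lambda>_. (0, 2 * (t - s))"] \<alpha>D)
  have gtpw: "(\<lambda>u. (\<gamma> u, t)) piecewise_C1_differentiable_on {0..1}"
    unfolding piecewise_C1_differentiable_on_def C1_differentiable_on_def
  proof (intro conjI exI[of _ K])
    show "continuous_on {0..1} (\<lambda>u. (\<gamma> u, t))"
      by (intro continuous_on_Pair gcont continuous_on_const)
    show "\<exists>D'. (\<forall>u\<in>{0..1} - K. ((\<lambda>u. (\<gamma> u, t)) has_vector_derivative D' u) (at u)) \<and> continuous_on ({0..1} - K) D'"
      by (intro exI[of _ "\<lambda>u. (D u, 0)"] conjI ballI has_vector_derivative_Pair gD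
          continuous_on_Pair Dcont continuous_on_const has_vector_derivative_const)
  qed (use finK in auto)
  have \<beta>pw: "\<beta> piecewise_C1_differentiable_on {1/2..1}"
  proof -
    have "((\<lambda>u. (\<gamma> u, t)) \<circ> (\<lambda>r. 2 * r - 1)) piecewise_C1_differentiable_on {1/2..1}"
    proof (rule piecewise_C1_differentiable_compose)
      show "(\<lambda>r::real. 2 * r - 1) piecewise_C1_differentiable_on {1/2..1}"
        by (rule C1_differentiable_imp_piecewise) (auto intro!: derivative_intros)
      have "(\<lambda>r::real. 2 * r - 1) ` {1/2..1} = {0..1}"
      proof safe
        fix u :: real assume "u \<in> {0..1}"
        then show "u \<in> (\<lambda>r::real. 2 * r - 1) ` {1/2..1}"
          by (intro image_eqI[of _ _ "(u + 1) / 2"]) (auto simp: field_simps)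
      qed auto
      then show "(\<lambda>u. (\<gamma> u, t)) piecewise_C1_differentiable_on (\<lambda>r::real. 2 * r - 1) ` {1/2..1}"
        using gtpw by simp
      fix z :: real
      have "{1/2..1} \<inter> (\<lambda>r::real. 2 * r - 1) -` {z} \<subseteq> {(z + 1) / 2}" by auto
      then show "finite ({1/2..1} \<inter> (\<lambda>r::real. 2 * r - 1) -` {z})"
        using finite_subset by blast
    qed
    then show ?thesis by (simp add: \<beta>_def o_def)
  qed
  have cpw: "c piecewise_C1_differentiable_on {0..1}"
    unfolding c_def
    by (rule piecewise_C1_differentiable_cases[OF \<alpha>pw \<beta>pw]) (auto simp: \<alpha>_def \<beta>_def g0)
  have \<alpha>in: "\<alpha> r \<in> S \<times> {0..T}" if "r \<in> {0..1/2}" for r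
  proof -
    have "s + 2 * r * (t - s) = (1 - 2 * r) * s + (2 * r) * t" by (simp add: algebra_simps)
    then show ?thesis using conv_mem[OF st, of "2 * r"] that xS by (auto simp: \<alpha>_def)
  qed
  have cadm: "admissible_curve c (S \<times> {0..T})"
    unfolding admissible_curve_def
  proof (intro conjI cpw subsetI)
    fix p assume "p \<in> c ` {0..1}"
    then obtain r where r: "r \<in> {0..1}" "p = c r" by blast
    show "p \<in> S \<times> {0..T}"
    proof (cases "r \<le> 1/2")
      case True then show ?thesis using r \<alpha>in by (auto simp: c_def)
    next
      case False
      then have "2 * r - 1 \<in> {0..1}" using r by auto
      then show ?thesis using r False gS st by (auto simp: c_def \<beta>_def)
    qed
  qed
  have c0: "c 0 = (x, s)" and c1: "c 1 = (y, t)"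
    by (auto simp: c_def \<alpha>_def \<beta>_def g1)
  have "length_dist Q (S \<times> {0..T}) (x,s) (y,t) \<le> curve_length Q c"
    unfolding length_dist_def by (rule Inf_lower) (use cadm c0 c1 in blast)
  also have "curve_length Q c \<le> ennreal (set_lebesgue_integral lborel {0..T} h) + curve_length (\<lambda>x v. g x t v v) \<gamma>"
  proof -
    define F where "F r = ennreal (sqrt (Q (c r) (vector_derivative c (at r)))) * indicator {0..1} r" for r
    define Fg where "Fg u = ennreal (sqrt (g (\<gamma> u) t (vector_derivative \<gamma> (at u)) (vector_derivative \<gamma> (at u))))" for u
    have "curve_length Q c = (\<integral>\<^sup>+r. F r \<partial>lborel)"
      by (simp add: curve_length_def F_def)
    also have "\<dots> \<le> (\<integral>\<^sup>+r. F r * indicator {..1/2} r \<partial>lborel) + (\<integral>\<^sup>+r. F r * indicator (-{..1/2}) r \<partial>lborel)"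
      by (rule nn_lower_split) simp
    also have "\<dots> \<le> (\<integral>\<^sup>+r. ennreal (2 * \<bar>t - s\<bar> / H x (s + 2 * r * (t - s))) * indicator {0<..<1/2} r \<partial>lborel)
                   + (\<integral>\<^sup>+r. 2 * Fg (2 * r - 1) * indicator {1/2<..<1} r \<partial>lborel)"
    proof (rule add_mono)
      show "(\<integral>\<^sup>+r. F r * indicator {..1/2} r \<partial>lborel)
          \<le> (\<integral>\<^sup>+r. ennreal (2 * \<bar>t - s\<bar> / H x (s + 2 * r * (t - s))) * indicator {0<..<1/2} r \<partial>lborel)"
      proof (rule nn_integral_mono_AE)
        have "AE r in lborel. r \<notin> {0, 1/2}"
          by (intro AE_not_in finite_imp_null_set_lborel) auto
        then show "AE r in lborel. F r * indicator {..1/2} r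
            \<le> ennreal (2 * \<bar>t - s\<bar> / H x (s + 2 * r * (t - s))) * indicator {0<..<1/2} r"
        proof (rule eventually_mono)
          fix r :: real assume r: "r \<notin> {0, 1/2}"
          show "F r * indicator {..1/2} r
            \<le> ennreal (2 * \<bar>t - s\<bar> / H x (s + 2 * r * (t - s))) * indicator {0<..<1/2} r"
          proof (cases "r \<in> {0<..<1/2}")
            case True
            have cD: "(c has_vector_derivative (0, 2 * (t - s))) (at r)"
              by (rule has_vector_derivative_transform_within_open[OF \<alpha>D, of "{..<1/2}"])
                 (use True in \<open>auto simp: c_def\<close>)
            define \<tau> where "\<tau> = s + 2 * r * (t - s)"
            have cr: "c r = (x, \<tau>)" using True by (simp add: c_def \<alpha>_def \<tau>_def)
            have \<tau>T: "\<tau> \<in> {0..T}" using \<alpha>in[of r] True by (simp add: \<alpha>_def \<tau>_def)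
            have Hp: "H x \<tau> > 0" using H_pos xS \<tau>T by blast
            have g00: "g x \<tau> 0 0 = 0" using bil xS \<tau>T bilinear_lzero by blast
            have ab: "\<bar>2 * t - 2 * s\<bar> = 2 * \<bar>t - s\<bar>" by (cases "s \<le> t") auto
            have "sqrt (Q (c r) (vector_derivative c (at r))) = 2 * \<bar>t - s\<bar> / H x \<tau>"
              using vector_derivative_at[OF cD] Hp ab
              by (simp add: cr Q_def g00 real_sqrt_divide abs_mult)
            then show ?thesis using True by (simp add: F_def \<tau>_def)
          next
            case False
            then have "r \<notin> {0..1/2}" using r by auto
            then show ?thesis by (auto simp: F_def indicator_def)
          qed
        qed
      qed
    next
      show "(\<integral>\<^sup>+r. F r * indicator (-{..1/2}) r \<partial>lborel)
          \<le> (\<integral>\<^sup>+r. 2 * Fg (2 * r - 1) * indicator {1/2<..<1} r \<partial>lborel)"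
      proof (rule nn_integral_mono_AE)
        have "AE r in lborel. r \<notin> insert 1 ((\<lambda>u. (u + 1) / 2) ` K)"
          by (intro AE_not_in finite_imp_null_set_lborel) (use finK in auto)
        then show "AE r in lborel. F r * indicator (-{..1/2}) r
            \<le> 2 * Fg (2 * r - 1) * indicator {1/2<..<1} r"
        proof (rule eventually_mono)
          fix r :: real assume r: "r \<notin> insert 1 ((\<lambda>u. (u + 1) / 2) ` K)"
          show "F r * indicator (-{..1/2}) r \<le> 2 * Fg (2 * r - 1) * indicator {1/2<..<1} r"
          proof (cases "r \<in> {1/2<..<1}")
            case True
            define u where "u = 2 * r - 1"
            have "u \<notin> K"
            proof
              assume "u \<in> K"
              then have "(u + 1) / 2 \<in> (\<lambda>u. (u + 1) / 2) ` K" by blast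
              then show False using r by (simp add: u_def)
            qed
            then have uK: "u \<in> {0..1} - K" using True by (auto simp: u_def)
            have lin: "((\<lambda>r::real. 2 * r - 1) has_vector_derivative 2) (at r)"
            proof -
              have "((\<lambda>r::real. 2 * r - 1) has_real_derivative 2) (at r)"
                by (auto intro!: derivative_eq_intros)
              then show ?thesis by (simp add: has_real_derivative_iff_has_vector_derivative)
            qed
            have gtD: "((\<lambda>v. (\<gamma> v, t)) has_vector_derivative (D u, 0)) (at (2 * r - 1))"
              using gD[OF uK] unfolding u_def
              by (intro has_vector_derivative_Pair) (auto intro: has_vector_derivative_const)
            have "(((\<lambda>v. (\<gamma> v, t)) \<circ> (\<lambda>r::real. 2 * r - 1)) has_vector_derivative 2 *\<^sub>R (D u, 0)) (at r)"
              by (rule vector_diff_chain_at[OF lin gtD])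
            then have \<beta>D: "(\<beta> has_vector_derivative (2 *\<^sub>R D u, 0)) (at r)"
              by (simp add: \<beta>_def o_def)
            have cD: "(c has_vector_derivative (2 *\<^sub>R D u, 0)) (at r)"
              by (rule has_vector_derivative_transform_within_open[OF \<beta>D, of "{1/2<..}"])
                 (use True in \<open>auto simp: c_def\<close>)
            have cr: "c r = (\<gamma> u, t)" using True by (simp add: c_def \<beta>_def u_def)
            have guS: "\<gamma> u \<in> S" using gS uK by auto
            have bl: "bilinear (g (\<gamma> u) t)" using bil guS st by blast
            have vg: "vector_derivative \<gamma> (at u) = D u" using vector_derivative_at[OF gD[OF uK]] .
            have "Q (c r) (vector_derivative c (at r)) = 4 * g (\<gamma> u) t (D u) (D u)"
              using vector_derivative_at[OF cD]
              by (simp add: cr Q_def bilinear_lmul[OF bl] bilinear_rmul[OF bl])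
            then have "sqrt (Q (c r) (vector_derivative c (at r))) = 2 * sqrt (g (\<gamma> u) t (D u) (D u))"
              by (simp add: real_sqrt_mult)
            then have "F r = 2 * Fg u" using True
              by (simp add: F_def Fg_def vg ennreal_mult')
            then show ?thesis using True by (simp add: u_def)
          next
            case False
            then have "r \<notin> {0..1} \<inter> -{..1/2}" using r by auto
            then show ?thesis by (auto simp: F_def indicator_def)
          qed
        qed
      qed
    qed
    also have "\<dots> \<le> ennreal (set_lebesgue_integral lborel {0..T} h) + (\<integral>\<^sup>+u. Fg u * indicator {0..1} u \<partial>lborel)"
    proof (rule add_mono)
      show "(\<integral>\<^sup>+r. ennreal (2 * \<bar>t - s\<bar> / H x (s + 2 * r * (t - s))) * indicator {0<..<1/2} r \<partial>lborel)
          \<le> ennreal (set_lebesgue_integral lborel {0..T} h)"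
        by (rule part1_bound[OF st h_L1]) (use H_pos H_bound xS in auto)
    qed (rule part2_bound)
    also have "(\<integral>\<^sup>+u. Fg u * indicator {0..1} u \<partial>lborel) = curve_length (\<lambda>x v. g x t v v) \<gamma>"
      by (simp add: curve_length_def Fg_def)
    finally show ?thesis .
  qed
  finally show ?thesis unfolding Q_def .
qed


theorem lemma3p6:
  fixes S :: "'a::euclidean_space set"
    and T D :: real
    and g :: "'a \<Rightarrow> real \<Rightarrow> 'a \<Rightarrow> 'a \<Rightarrow> real"
    and H :: "'a \<Rightarrow> real \<Rightarrow> real"
    and h :: "real \<Rightarrow> real"
  assumes surf: "closed_smooth_surface S"
    and metric: "smooth_metric_family S T g"
    and H_smooth: "\<exists>W. open W \<and> S \<times> {0..T} \<subseteq> W \<and> smooth_on W (\<lambda>(x,t). H x t)"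
    and H_pos: "\<forall>x\<in>S. \<forall>t\<in>{0..T}. H x t > 0"
    and diam_bound: "\<forall>t\<in>{0..T}. diam_slice S g t \<le> ereal D"
    and h_L1: "set_integrable lborel {0..T} h"
    and H_bound: "\<forall>x\<in>S. \<forall>t\<in>{0..T}. 1 / H x t \<le> h t"
  shows "diam_UT S T g H \<le> ereal (set_lebesgue_integral lborel {0..T} h) + ereal D"
proof -
  define I where "I = set_lebesgue_integral lborel {0..T} h"
  define Q where "Q = (\<lambda>(x,t) (v,\<tau>). \<tau>\<^sup>2 / (H x t)\<^sup>2 + g x t v v)"
  have bil: "\<forall>x\<in>S. \<forall>t\<in>{0..T}. bilinear (g x t)"
    using metric unfolding smooth_metric_family_def by blast
  show ?thesis
    unfolding diam_UT_def length_diam_def I_def[symmetric]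
  proof (rule SUP_least)
    fix pq assume "pq \<in> (S \<times> {0..T}) \<times> (S \<times> {0..T})"
    then obtain x s y t where pq: "pq = ((x,s),(y,t))" and xS: "x \<in> S" and yS: "y \<in> S"
      and st: "s \<in> {0..T}" "t \<in> {0..T}" by auto
    define Qt where "Qt = (\<lambda>x v. g x t v v)"
    define X where "X = {curve_length Qt \<gamma> | \<gamma>. admissible_curve \<gamma> S \<and> \<gamma> 0 = x \<and> \<gamma> 1 = y}"
    define LDt where "LDt = length_dist Qt S x y"
    have LDtX: "LDt = Inf X" unfolding LDt_def X_def length_dist_def ..
    have "enn2ereal LDt \<le> diam_slice S g t"
      unfolding diam_slice_def length_diam_def LDt_def Qt_def
      by (rule SUP_upper2[of "(x,y)"]) (use xS yS in auto)
    also have "\<dots> \<le> ereal D" using diam_bound st by blast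
    finally have LDtD: "enn2ereal LDt \<le> ereal D" .
    have LDt_fin: "LDt < top"
    proof (rule ccontr)
      assume "\<not> LDt < top"
      then have "LDt = top" by (metis less_top)
      then show False using LDtD by simp
    qed
    have hpos: "\<And>u. u \<in> {0..T} \<Longrightarrow> 0 \<le> h u"
      by (meson H_pos H_bound xS less_eq_real_def order_trans zero_le_divide_1_iff)
    have I0: "0 \<le> I" unfolding I_def set_lebesgue_integral_def
      by (rule Bochner_Integration.integral_nonneg) (use hpos in \<open>auto simp: indicator_def\<close>)
    have main: "length_dist Q (S \<times> {0..T}) (x,s) (y,t) \<le> ennreal I + LDt"
    proof (rule ennreal_le_epsilon)
      fix e :: real assume e: "0 < e"
      have "LDt < LDt + ennreal e"
        using LDt_fin e by (cases LDt rule: ennreal_cases) (auto simp: ennreal_plus[symmetric] ennreal_lessI simp del: ennreal_plus)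
      then obtain l where lX: "l \<in> X" and l: "l < LDt + ennreal e"
        unfolding LDtX by (auto simp: Inf_less_iff)
      then obtain \<gamma> where adm: "admissible_curve \<gamma> S" "\<gamma> 0 = x" "\<gamma> 1 = y" and lc: "l = curve_length Qt \<gamma>"
        unfolding X_def by blast
      have "length_dist Q (S \<times> {0..T}) (x,s) (y,t) \<le> ennreal I + l"
        unfolding Q_def I_def lc Qt_def
        by (rule join_curve[OF bil H_pos h_L1 H_bound xS st adm])
      also have "\<dots> \<le> ennreal I + LDt + ennreal e" using l by (simp add: add.assoc add_left_mono)
      finally show "length_dist Q (S \<times> {0..T}) (x,s) (y,t) \<le> ennreal I + LDt + ennreal e" .
    qed
    have "enn2ereal (length_dist Q (S \<times> {0..T}) (x,s) (y,t)) \<le> enn2ereal (ennreal I + LDt)"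
      using main by (simp add: less_eq_ennreal.rep_eq)
    also have "\<dots> = ereal I + enn2ereal LDt"
      using I0 by (simp add: plus_ennreal.rep_eq)
    also have "\<dots> \<le> ereal I + ereal D" using LDtD by (rule add_left_mono)
    finally show "(\<lambda>(p, q). enn2ereal (length_dist (\<lambda>(x, t) (v, \<tau>). \<tau>\<^sup>2 / (H x t)\<^sup>2 + g x t v v) (S \<times> {0..T}) p q)) pq
        \<le> ereal I + ereal D"
      unfolding pq Q_def by simp
  qed
qed

end
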